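(* Let $\theta\in(\pi,2\pi)$. Then for all $x,y\in S_\theta$, $s_{S_\theta}(x,y)\le 2\sin(\theta/4)\, j^*_{S_\theta}(x,y)$, and the constant $2\sin(\theta/4)$ is sharp.
   Context: $S_\theta=\{x\in\mathbb{C}:0<\arg(x)<\theta\}$. For a domain $G\subsetneq\mathbb{C}$, $d_G(x)=\inf\{|x-z|:z\in\partial G\}$, $s_G(x,y)=\frac{|x-y|}{\inf_{z\in\partial G}(|x-z|+|z-y|)}$, and $j^*_G(x,y)=\frac{|x-y|}{|x-y|+2\min\{d_G(x),d_G(y)\}}$. *)

theory Defs
  imports "HOL-Analysis.Analysis"
begin

definition arg0 :: "complex \<Rightarrow> real" where
  "arg0 z = (if 0 \<le> Arg z then Arg z else Arg z + 2 * pi)"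

text \<open>The open sector S_theta = {x. 0 < arg x < theta}; the origin has no argument
  and is excluded.\<close>
definition sector :: "real \<Rightarrow> complex set" where
  "sector \<theta> = {x. x \<noteq> 0 \<and> 0 < arg0 x \<and> arg0 x < \<theta>}"

definition bdist :: "complex set \<Rightarrow> complex \<Rightarrow> real" where
  "bdist G x = Inf ((\<lambda>z. cmod (x - z)) ` frontier G)"

definition s_metric :: "complex set \<Rightarrow> complex \<Rightarrow> complex \<Rightarrow> real" where
  "s_metric G x y = cmod (x - y) / Inf ((\<lambda>z. cmod (x - z) + cmod (z - y)) ` frontier G)"

definition jstar_metric :: "complex set \<Rightarrow> complex \<Rightarrow> complex \<Rightarrow> real" where
  "jstar_metric G x y = cmod (x - y) / (cmod (x - y) + 2 * min (bdist G x) (bdist G y))"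

end

theory Submission
  imports Defs
begin

lemma cis_2pi_shift: "cis (a + 2*pi) = cis a"
  by (simp add: cis.ctr complex_eq_iff)

lemma arg0_props:
  assumes "z \<noteq> 0"
  shows "0 \<le> arg0 z \<and> arg0 z < 2*pi \<and> z = of_real (cmod z) * cis (arg0 z)"
proof -
  have b: "- pi < Arg z" "Arg z \<le> pi" using Arg_bounded by auto
  have z: "z = of_real (cmod z) * cis (Arg z)" using rcis_cmod_Arg[of z] by (simp add: rcis_def)
  show ?thesis
  proof (cases "0 \<le> Arg z")
    case True
    then show ?thesis using b z by (simp add: arg0_def)
  next
    case False
    then show ?thesis using b z by (simp add: arg0_def cis_2pi_shift)
  qed
qed

lemma arg0_cis:
  assumes "r > 0" "0 \<le> \<phi>" "\<phi> < 2*pi"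
  shows "arg0 (of_real r * cis \<phi>) = \<phi>"
proof (cases "\<phi> \<le> pi")
  case True
  then have "Arg (of_real r * cis \<phi>) = \<phi>" using assms Arg_cis[of \<phi>] by simp
  then show ?thesis using assms by (simp add: arg0_def)
next
  case False
  have "cis \<phi> = cis (\<phi> - 2*pi)" using cis_2pi_shift[of "\<phi> - 2*pi"] by simp
  moreover have "Arg (cis (\<phi> - 2*pi)) = \<phi> - 2*pi" using False assms by (intro Arg_cis) auto
  ultimately have "Arg (of_real r * cis \<phi>) = \<phi> - 2*pi" using assms by simp
  then show ?thesis using False assms by (simp add: arg0_def)
qed

lemma sector_iff:
  assumes "\<theta> \<le> 2*pi"
  shows "z \<in> sector \<theta> \<longleftrightarrow> (\<exists>r \<phi>. r > 0 \<and> 0 < \<phi> \<and> \<phi> < \<theta> \<and> z = of_real r * cis \<phi>)"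
proof
  assume "z \<in> sector \<theta>"
  then have "z \<noteq> 0" "0 < arg0 z" "arg0 z < \<theta>" by (auto simp: sector_def)
  then show "\<exists>r \<phi>. r > 0 \<and> 0 < \<phi> \<and> \<phi> < \<theta> \<and> z = of_real r * cis \<phi>"
    using arg0_props[of z] by (intro exI[of _ "cmod z"] exI[of _ "arg0 z"]) auto
next
  assume "\<exists>r \<phi>. r > 0 \<and> 0 < \<phi> \<and> \<phi> < \<theta> \<and> z = of_real r * cis \<phi>"
  then obtain r \<phi> where h: "r > 0" "0 < \<phi>" "\<phi> < \<theta>" "z = of_real r * cis \<phi>" by blast
  then have "arg0 z = \<phi>" using assms by (intro arg0_cis[of r \<phi>, simplified h(4)[symmetric]]) auto
  moreover have "z \<noteq> 0" using h by simp
  ultimately show "z \<in> sector \<theta>" using h by (simp add: sector_def)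
qed

definition rays :: "real \<Rightarrow> complex set" where
  "rays \<theta> = {complex_of_real t | t. t \<ge> 0} \<union> {complex_of_real t * cis \<theta> | t. t \<ge> 0}"

lemma Im_mult_cis: "Im (z * cis a) = Im z * cos a + Re z * sin a"
  by (simp add: cis.ctr)

lemma sector_U:
  assumes "pi < \<theta>" "\<theta> < 2*pi"
  shows "z \<in> sector \<theta> \<longleftrightarrow> 0 < Im z \<or> Im (z * cis (-\<theta>)) < 0"
proof (cases "z = 0")
  case True
  then show ?thesis by (simp add: sector_def)
next
  case False
  define \<phi> where "\<phi> = arg0 z"
  define r where "r = cmod z"
  have r: "r > 0" using False by (simp add: r_def)
  have p: "0 \<le> \<phi>" "\<phi> < 2*pi" and z: "z = of_real r * cis \<phi>"
    using arg0_props[OF False] by (auto simp: \<phi>_def r_def)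
  have Iz: "Im z = r * sin \<phi>" using z by simp
  have Iz2: "Im (z * cis (-\<theta>)) = r * sin (\<phi> - \<theta>)"
    using z by (simp add: cis_mult sin_diff algebra_simps)
  have mem: "z \<in> sector \<theta> \<longleftrightarrow> 0 < \<phi> \<and> \<phi> < \<theta>" using False by (simp add: sector_def \<phi>_def)
  show ?thesis
  proof
    assume "z \<in> sector \<theta>"
    then have h: "0 < \<phi>" "\<phi> < \<theta>" using mem by auto
    show "0 < Im z \<or> Im (z * cis (-\<theta>)) < 0"
    proof (cases "\<phi> < pi")
      case True
      then have "sin \<phi> > 0" using h by (intro sin_gt_zero) auto
      then show ?thesis using Iz r by simp
    next
      case False
      have "sin (\<theta> - \<phi>) > 0" using False h assms
        by (intro sin_gt_zero) auto
      moreover have "sin (\<phi> - \<theta>) = - sin (\<theta> - \<phi>)" by (metis minus_diff_eq sin_minus)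
      ultimately have "sin (\<phi> - \<theta>) < 0" by simp
      then show ?thesis using Iz2 r by (simp add: mult_pos_neg)
    qed
  next
    assume a: "0 < Im z \<or> Im (z * cis (-\<theta>)) < 0"
    show "z \<in> sector \<theta>"
    proof (cases "0 < Im z")
      case True
      then have s: "sin \<phi> > 0" using Iz r by (simp add: zero_less_mult_iff)
      have "\<phi> \<noteq> 0" using s by auto
      moreover have "\<phi> < pi"
      proof (rule ccontr)
        assume "\<not> \<phi> < pi"
        then have "sin \<phi> \<le> 0" using p by (intro sin_le_zero) auto
        then show False using s by simp
      qed
      ultimately show ?thesis using mem p assms by auto
    next
      case False
      then have "r * sin (\<phi> - \<theta>) < 0" using a Iz2 by linarith
      then have s: "sin (\<phi> - \<theta>) < 0" using r by (simp add: mult_less_0_iff)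
      have "\<phi> \<noteq> 0"
      proof
        assume "\<phi> = 0"
        then have "sin (\<phi> - \<theta>) = - sin \<theta>" by simp
        moreover have "sin \<theta> < 0" using assms by (intro sin_lt_zero) auto
        ultimately show False using s by simp
      qed
      moreover have "\<phi> < \<theta>"
      proof (rule ccontr)
        assume "\<not> \<phi> < \<theta>"
        then have "sin (\<phi> - \<theta>) \<ge> 0" using p assms by (intro sin_ge_zero) auto
        then show False using s by simp
      qed
      ultimately show ?thesis using mem p by auto
    qed
  qed
qed

lemma sector_eq_U:
  assumes "pi < \<theta>" "\<theta> < 2*pi"
  shows "sector \<theta> = {z. 0 < Im z} \<union> {z. Im (z * cis (-\<theta>)) < 0}"
  using sector_U[OF assms] by auto

lemma open_sector:
  assumes "pi < \<theta>" "\<theta> < 2*pi"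
  shows "open (sector \<theta>)"
  unfolding sector_eq_U[OF assms]
  by (intro open_Un open_Collect_less continuous_intros)

lemma neg_mul_aux: "(s::real) < 0 \<Longrightarrow> a * s \<le> 0 \<Longrightarrow> 0 \<le> a"
  by (cases "a < 0") (auto dest: mult_neg_neg)

lemma neg_mul_aux2: "0 \<le> (t::real) \<Longrightarrow> s < 0 \<Longrightarrow> \<not> 0 < t * s"
  using mult_nonneg_nonpos[of t s] by auto

lemma sin_theta_neg: "pi < \<theta> \<Longrightarrow> \<theta> < 2*pi \<Longrightarrow> sin \<theta> < 0"
  by (rule sin_lt_zero)

lemma frontier_sector:
  assumes "pi < \<theta>" "\<theta> < 2*pi"
  shows "frontier (sector \<theta>) = rays \<theta>"
proof
  have st: "sin \<theta> < 0" using assms by (rule sin_theta_neg)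
  define C where "C = {z. 0 \<le> Im z} \<union> {z. Im (z * cis (-\<theta>)) \<le> 0}"
  have cC: "closed C" unfolding C_def
    by (intro closed_Un closed_Collect_le continuous_intros)
  have "sector \<theta> \<subseteq> C" unfolding sector_eq_U[OF assms] C_def by auto
  then have clC: "closure (sector \<theta>) \<subseteq> C" using cC by (rule closure_minimal)
  show "frontier (sector \<theta>) \<subseteq> rays \<theta>"
  proof
    fix z assume "z \<in> frontier (sector \<theta>)"
    then have zc: "z \<in> C" and zn: "z \<notin> sector \<theta>"
      using clC open_sector[OF assms] interior_open by (auto simp: frontier_def)
    have n1: "Im z \<le> 0" and n2: "0 \<le> Im (z * cis (-\<theta>))"
      using zn sector_U[OF assms, of z] by auto
    show "z \<in> rays \<theta>"
    proof (cases "Im z = 0")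
      case True
      then have zr: "z = of_real (Re z)" by (simp add: complex_eq_iff)
      have e1: "Im (z * cis (-\<theta>)) = - Re z * sin \<theta>" using True by (simp add: cis.ctr)
      have "0 \<le> - Re z * sin \<theta>" using n2 e1 by linarith
      then have "Re z \<ge> 0" using st neg_mul_aux[of "sin \<theta>" "Re z"] by simp
      then show ?thesis unfolding rays_def using zr by blast
    next
      case False
      then have i2: "Im (z * cis (-\<theta>)) = 0" using zc n1 n2 unfolding C_def by auto
      define w where "w = z * cis (-\<theta>)"
      have zw: "z = of_real (Re w) * cis \<theta>"
      proof -
        have "w = of_real (Re w)" using i2 by (simp add: w_def complex_eq_iff)
        have c1: "cis (-\<theta>) * cis \<theta> = 1" by (simp add: cis_mult)
        have "z = w * cis \<theta>" by (simp only: w_def mult.assoc c1 mult_1_right)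
        then show ?thesis using \<open>w = of_real (Re w)\<close> by metis
      qed
      have "Im z = Re w * sin \<theta>" using zw by simp
      then have "Re w \<ge> 0" using n1 st neg_mul_aux[of "sin \<theta>" "Re w"] by simp
      then show ?thesis unfolding rays_def using zw by blast
    qed
  qed
  show "rays \<theta> \<subseteq> frontier (sector \<theta>)"
  proof
    fix z assume "z \<in> rays \<theta>"
    then obtain t where t: "t \<ge> 0" and zz: "z = of_real t \<or> z = of_real t * cis \<theta>"
      unfolding rays_def by blast
    have notin: "z \<notin> sector \<theta>"
    proof -
      have "\<not> (0 < Im z \<or> Im (z * cis (-\<theta>)) < 0)"
        using zz t st neg_mul_aux2[OF t st] by (auto simp: cis.ctr)
      then show ?thesis using sector_U[OF assms] by blast
    qed
    have "z \<in> closure (sector \<theta>)"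
      unfolding closure_approachable
    proof (intro allI impI)
      fix e :: real assume e: "e > 0"
      show "\<exists>y\<in>sector \<theta>. dist y z < e"
      proof (cases "z = of_real t")
        case True
        define y where "y = z + \<i> * of_real (e/2)"
        have "y \<in> sector \<theta>" using sector_U[OF assms, of y] e True by (simp add: y_def)
        moreover have "dist y z < e" using e by (simp add: y_def dist_norm norm_mult)
        ultimately show ?thesis by blast
      next
        case False
        then have z2: "z = of_real t * cis \<theta>" using zz by blast
        define y where "y = (of_real t - \<i> * of_real (e/2)) * cis \<theta>"
        have c2: "cis \<theta> * cis (-\<theta>) = 1" by (simp add: cis_mult)
        have "y * cis (-\<theta>) = of_real t - \<i> * of_real (e/2)"
          by (simp only: y_def mult.assoc c2 mult_1_right)
        then have "y \<in> sector \<theta>" using sector_U[OF assms, of y] e by simp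
        moreover have "y - z = - (\<i> * of_real (e/2)) * cis \<theta>" by (simp add: y_def z2 algebra_simps)
        then have "dist y z < e" using e by (simp add: dist_norm norm_mult)
        ultimately show ?thesis by blast
      qed
    qed
    then show "z \<in> frontier (sector \<theta>)"
      using notin open_sector[OF assms] interior_open by (auto simp: frontier_def)
  qed
qed

definition sp :: "real \<Rightarrow> real" where "sp a = (if a \<le> pi/2 then sin a else 1)"

lemma sp_le1: "sp a \<le> 1" by (simp add: sp_def)
lemma sp_nonneg: "0 \<le> a \<Longrightarrow> 0 \<le> sp a"
  by (simp add: sp_def sin_ge_zero)

lemma sp_concave:
  assumes "0 \<le> a" "0 \<le> b"
  shows "sp a + sp b \<le> 2 * sp ((a+b)/2)"
proof -
  have key: "sp a + sp b \<le> 2 * sp ((a+b)/2)" if ab: "0 \<le> a" "0 \<le> b" "b \<le> a" for a b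
  proof (cases "a \<le> pi/2")
    case True
    then have "b \<le> pi/2" "(a+b)/2 \<le> pi/2" using ab by auto
    then have e: "sp a + sp b = 2 * sin ((a+b)/2) * cos ((a-b)/2)" "sp ((a+b)/2) = sin ((a+b)/2)"
      using True by (simp_all add: sp_def sin_plus_sin)
    have "0 \<le> sin ((a+b)/2)" using ab True by (intro sin_ge_zero) auto
    then have "2 * sin ((a+b)/2) * cos ((a-b)/2) \<le> 2 * sin ((a+b)/2)"
      using cos_le_one[of "(a-b)/2"] by (simp add: mult_left_le)
    then show ?thesis using e by simp
  next
    case False
    show ?thesis
    proof (cases "(a+b)/2 \<le> pi/2")
      case False
      then show ?thesis by (simp add: sp_def)
    next
      case True
      then have bb: "b \<le> pi/2" using ab by auto
      have e1: "sp a + sp b = 1 + sin b" using False bb by (simp add: sp_def)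
      have e2: "sp ((a+b)/2) = sin ((a+b)/2)" using True by (simp add: sp_def)
      have m: "sin ((pi/2 + b)/2) \<le> sin ((a+b)/2)"
        using False True ab pi_gt_zero by (intro sin_monotone_2pi_le) (auto simp: field_simps)
      have "1 + sin b = 2 * sin ((pi/2 + b)/2) * cos ((pi/2 - b)/2)"
        using sin_plus_sin[of "pi/2" b] by simp
      also have "\<dots> \<le> 2 * sin ((pi/2 + b)/2)"
      proof -
        have "0 \<le> sin ((pi/2 + b)/2)" using ab bb by (intro sin_ge_zero) auto
        then show ?thesis using cos_le_one[of "(pi/2 - b)/2"] by (simp add: mult_left_le)
      qed
      finally show ?thesis using e1 e2 m by simp
    qed
  qed
  show ?thesis
  proof (cases "b \<le> a")
    case True then show ?thesis using key assms by blast
  next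
    case False then show ?thesis using key[of b a] assms by (simp add: add.commute)
  qed
qed

lemma theta_consts:
  assumes "pi < \<theta>" "\<theta> < 2*pi"
  defines "\<sigma> \<equiv> - cos (\<theta>/2)" and "k \<equiv> 2 * sin (\<theta>/4)"
  shows "0 < \<sigma>" "\<sigma> < 1" "k\<^sup>2 = 2 + 2*\<sigma>" "1 + \<sigma> \<le> k" "0 < sin (\<theta>/4)"
    "cos \<theta> = 2*\<sigma>\<^sup>2 - 1" "sin \<theta> = - 2 * \<sigma> * sin (\<theta>/2)" "0 \<le> sin (\<theta>/2)" "sin (\<theta>/2) \<le> 1"
    "0 < k" "k \<le> 2"
proof -
  have c: "cos (\<theta>/2) < 0"
  proof -
    have "cos (\<theta>/2) < cos (pi/2)" using assms by (intro cos_monotone_0_pi) auto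
    then show ?thesis by simp
  qed
  then show s0: "0 < \<sigma>" unfolding \<sigma>_def by linarith
  have "cos pi < cos (\<theta>/2)" using assms by (intro cos_monotone_0_pi) auto
  then show s1: "\<sigma> < 1" unfolding \<sigma>_def by simp
  have "cos (2 * (\<theta>/4)) = 1 - 2 * (sin (\<theta>/4))\<^sup>2" by (rule cos_double_sin)
  then have h: "cos (\<theta>/2) = 1 - 2 * (sin (\<theta>/4))\<^sup>2" by simp
  have "k\<^sup>2 = 4 * (sin (\<theta>/4))\<^sup>2" unfolding k_def by (simp add: power_mult_distrib)
  then show kk: "k\<^sup>2 = 2 + 2*\<sigma>" unfolding \<sigma>_def using h by linarith
  show sp: "0 < sin (\<theta>/4)" using assms by (intro sin_gt_zero) auto
  then show kp: "0 < k" unfolding k_def by linarith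
  have "\<sigma> * \<sigma> \<le> 1" using s0 s1 by (intro mult_le_one) auto
  moreover have "(1 + \<sigma>)\<^sup>2 = 1 + 2*\<sigma> + \<sigma> * \<sigma>" by (simp add: power2_eq_square algebra_simps)
  ultimately have "(1 + \<sigma>)\<^sup>2 \<le> k\<^sup>2" using kk by linarith
  then show "1 + \<sigma> \<le> k" using kp power2_le_imp_le[of "1+\<sigma>" k] by linarith
  have "cos (2 * (\<theta>/2)) = 2 * cos (\<theta>/2) ^ 2 - 1" by (rule cos_double_cos)
  then show "cos \<theta> = 2*\<sigma>\<^sup>2 - 1" unfolding \<sigma>_def by simp
  have "sin (2 * (\<theta>/2)) = 2 * sin (\<theta>/2) * cos (\<theta>/2)" by (rule sin_double)
  then show "sin \<theta> = - 2 * \<sigma> * sin (\<theta>/2)" unfolding \<sigma>_def by simp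
  show "0 \<le> sin (\<theta>/2)" using assms by (intro sin_ge_zero) auto
  show "sin (\<theta>/2) \<le> 1" by simp
  show "k \<le> 2" unfolding k_def by simp
qed

lemma trig_V:
  assumes th: "pi < \<theta>" "\<theta> < 2*pi" and g: "0 \<le> \<gamma>" "\<gamma> \<le> \<theta>"
  shows "sin (\<gamma>/2) + sp ((\<theta>-\<gamma>)/2) \<le> 2 * sin (\<theta>/4)"
proof (cases "(\<theta>-\<gamma>)/2 \<le> pi/2")
  case True
  have e: "sin (\<gamma>/2) + sin ((\<theta>-\<gamma>)/2) = 2 * sin ((\<gamma>/2 + (\<theta>-\<gamma>)/2)/2) * cos ((\<gamma>/2 - (\<theta>-\<gamma>)/2)/2)"
    by (rule sin_plus_sin)
  have h4: "(\<gamma>/2 + (\<theta>-\<gamma>)/2)/2 = \<theta>/4" by (simp add: field_simps)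
  have sp: "sp ((\<theta>-\<gamma>)/2) = sin ((\<theta>-\<gamma>)/2)" using True by (simp add: sp_def)
  have e2: "sin (\<gamma>/2) + sp ((\<theta>-\<gamma>)/2) = 2 * sin (\<theta>/4) * cos ((\<gamma>/2 - (\<theta>-\<gamma>)/2)/2)"
    unfolding sp using e[unfolded h4] .
  have "0 < sin (\<theta>/4)" using theta_consts[OF th] by simp
  then show ?thesis unfolding e2 using cos_le_one[of "(\<gamma>/2 - (\<theta>-\<gamma>)/2)/2"]
    by (simp add: mult_left_le)
next
  case False
  have m: "sin (\<gamma>/2) \<le> sin (\<theta>/2 - pi/2)"
    using False g th by (intro sin_monotone_2pi_le) (auto simp: field_simps)
  have "sin (\<theta>/2 - pi/2) = - cos (\<theta>/2)" by (simp add: sin_diff)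
  then have "sin (\<gamma>/2) + sp ((\<theta>-\<gamma>)/2) \<le> 1 + - cos (\<theta>/2)" using m False by (simp add: sp_def)
  also have "\<dots> \<le> 2 * sin (\<theta>/4)" using theta_consts(4)[OF th] by simp
  finally show ?thesis .
qed

lemma trig_R2:
  assumes th: "pi < \<theta>" "\<theta> < 2*pi" and g: "0 \<le> g" "g \<le> pi/2"
  shows "sin (g - pi + \<theta>/2) \<le> (2 * sin (\<theta>/4) - 1) * sin g"
proof -
  have "sin (g - pi + \<theta>/2) = - (sin g * cos (\<theta>/2) + cos g * sin (\<theta>/2))"
    by (simp add: sin_add sin_diff cos_add cos_diff algebra_simps)
  moreover have "0 \<le> cos g * sin (\<theta>/2)"
    using g theta_consts(8)[OF th] by (intro mult_nonneg_nonneg cos_ge_zero) auto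
  moreover have "0 \<le> sin g" using g by (intro sin_ge_zero) auto
  moreover have "- cos (\<theta>/2) \<le> 2 * sin (\<theta>/4) - 1" using theta_consts(4)[OF th] by simp
  ultimately have "sin (g - pi + \<theta>/2) \<le> (- cos (\<theta>/2)) * sin g"
    by (simp add: algebra_simps)
  also have "\<dots> \<le> (2 * sin (\<theta>/4) - 1) * sin g"
    using \<open>0 \<le> sin g\<close> \<open>- cos (\<theta>/2) \<le> 2 * sin (\<theta>/4) - 1\<close> by (intro mult_right_mono)
  finally show ?thesis .
qed

lemma lam_ab:
  fixes S T k :: real
  assumes "0 \<le> S" "S \<le> 1" "0 \<le> T" "T \<le> 1" "S + T \<le> k" "2 \<le> k\<^sup>2" "0 \<le> k"
  obtains l where "l > 0" "1 + l\<^sup>2 \<le> 2*k*l" "S\<^sup>2 + l\<^sup>2 + 2*l*T \<le> 2*k*l"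
proof -
  have k1: "k > 1"
  proof (rule ccontr)
    assume "\<not> k > 1"
    then have "k * k \<le> 1 * 1" using assms(7) by (intro mult_mono) auto
    then show False using assms(6) by (simp add: power2_eq_square)
  qed
  show ?thesis
  proof (cases "k - 1 \<le> S")
    case True
    have "(S - (k-1)) * (1 - S) \<ge> 0" using True assms by simp
    then have a1: "S\<^sup>2 \<le> k*S - k + 1" by (simp add: power2_eq_square algebra_simps)
    have "k * S \<ge> k * (k-1)" using True assms by (intro mult_left_mono) auto
    then have "k * S \<ge> k\<^sup>2 - k" by (simp add: power2_eq_square algebra_simps)
    then have a: "1 + S\<^sup>2 \<le> 2*k*S" using a1 assms(6) by linarith
    have "S * (S + T) \<le> S * k" using assms by (intro mult_left_mono) auto
    then have b: "S\<^sup>2 + S\<^sup>2 + 2*S*T \<le> 2*k*S" by (simp add: power2_eq_square algebra_simps)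
    have "S > 0" using True k1 by linarith
    then show ?thesis using a b that by blast
  next
    case False
    define l where "l = k - 1"
    have lp: "l > 0" using k1 by (simp add: l_def)
    have a: "1 + l\<^sup>2 \<le> 2*k*l" using assms(6) by (simp add: l_def power2_eq_square algebra_simps)
    have "S * S \<le> l * l" using False assms by (intro mult_mono) (auto simp: l_def)
    moreover have "l * T \<le> l * 1" using lp assms by (intro mult_left_mono) auto
    ultimately have b: "S\<^sup>2 + l\<^sup>2 + 2*l*T \<le> 2*k*l" by (simp add: l_def power2_eq_square algebra_simps)
    show ?thesis using lp a b that by blast
  qed
qed

lemma alg_V:
  fixes r \<rho> X m S C T k :: real
  assumes rp: "r > 0" "\<rho> > 0" and X: "X \<ge> 0" "X\<^sup>2 = (r+\<rho>)\<^sup>2 - 4*r*\<rho>*C\<^sup>2"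
    and SC: "S\<^sup>2 + C\<^sup>2 = 1" "0 \<le> S" "S \<le> 1" and T: "0 \<le> T" "T \<le> 1"
    and k: "S + T \<le> k" "2 \<le> k\<^sup>2" "0 \<le> k" and m: "m*(r+\<rho>) \<le> 2*r*\<rho>*T"
  shows "X + 2*m \<le> k*(r+\<rho>)"
proof -
  obtain l where l: "l > 0" "1 + l\<^sup>2 \<le> 2*k*l" "S\<^sup>2 + l\<^sup>2 + 2*l*T \<le> 2*k*l"
    using lam_ab[OF SC(2,3) T k] by blast
  define n where "n = r + \<rho>"
  define P where "P = r * \<rho>"
  have np: "n > 0" using rp by (simp add: n_def)
  have P4: "4*P \<le> n\<^sup>2"
  proof -
    have "0 \<le> (r - \<rho>)\<^sup>2" by simp
    then show ?thesis by (simp add: P_def n_def power2_eq_square algebra_simps)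
  qed
  have Pp: "P \<ge> 0" using rp by (simp add: P_def)
  have amgm: "2*l*n*X \<le> X\<^sup>2 + l\<^sup>2*n\<^sup>2"
  proof -
    have "0 \<le> (X - l*n)\<^sup>2" by simp
    then show ?thesis by (simp add: power2_eq_square algebra_simps)
  qed
  have mm: "2*l*n*(2*m) \<le> 8*l*P*T"
  proof -
    have "l * (m*n) \<le> l * (2*P*T)" using m l by (intro mult_left_mono) (auto simp: n_def P_def)
    then show ?thesis by (simp add: algebra_simps)
  qed
  have main: "n\<^sup>2 - 4*P*C\<^sup>2 + l\<^sup>2*n\<^sup>2 + 8*l*P*T \<le> 2*k*l*n\<^sup>2"
  proof (cases "2*l*T - C\<^sup>2 \<ge> 0")
    case True
    have "4*P*(2*l*T - C\<^sup>2) \<le> n\<^sup>2 * (2*l*T - C\<^sup>2)" using True P4 by (intro mult_right_mono) auto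
    moreover have "n\<^sup>2 * (S\<^sup>2 + l\<^sup>2 + 2*l*T) \<le> n\<^sup>2 * (2*k*l)" using l(3) by (intro mult_left_mono) auto
    ultimately have h: "4*P*(2*l*T - C\<^sup>2) \<le> n\<^sup>2 * (2*l*T - C\<^sup>2)" "n\<^sup>2 * (S\<^sup>2 + l\<^sup>2 + 2*l*T) \<le> n\<^sup>2 * (2*k*l)"
      by auto
    have S2: "S\<^sup>2 = 1 - C\<^sup>2" using SC(1) by simp
    have e1: "n\<^sup>2 - 4*P*C\<^sup>2 + l\<^sup>2*n\<^sup>2 + 8*l*P*T = n\<^sup>2 + l\<^sup>2*n\<^sup>2 + 4*P*(2*l*T - C\<^sup>2)"
      by (simp add: algebra_simps)
    have e2: "n\<^sup>2 + l\<^sup>2*n\<^sup>2 + n\<^sup>2 * (2*l*T - C\<^sup>2) = n\<^sup>2 * (S\<^sup>2 + l\<^sup>2 + 2*l*T)"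
      unfolding S2 by (simp add: algebra_simps)
    have e3: "n\<^sup>2 * (2*k*l) = 2*k*l*n\<^sup>2" by simp
    show ?thesis unfolding e1 using h e2 e3 by linarith
  next
    case False
    have "4*P*(2*l*T - C\<^sup>2) \<le> 0" using False Pp by (simp add: mult_nonneg_nonpos)
    moreover have "n\<^sup>2 * (1 + l\<^sup>2) \<le> n\<^sup>2 * (2*k*l)" using l(2) by (intro mult_left_mono) auto
    ultimately have h: "4*P*(2*l*T - C\<^sup>2) \<le> 0" "n\<^sup>2 * (1 + l\<^sup>2) \<le> n\<^sup>2 * (2*k*l)" by auto
    have e1: "n\<^sup>2 - 4*P*C\<^sup>2 + l\<^sup>2*n\<^sup>2 + 8*l*P*T = n\<^sup>2 * (1 + l\<^sup>2) + 4*P*(2*l*T - C\<^sup>2)"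
      by (simp add: algebra_simps)
    have e3: "n\<^sup>2 * (2*k*l) = 2*k*l*n\<^sup>2" by simp
    show ?thesis unfolding e1 using h e3 by linarith
  qed
  have "2*l*n*(X + 2*m) = 2*l*n*X + 2*l*n*(2*m)" by (simp add: algebra_simps)
  also have "\<dots> \<le> X\<^sup>2 + l\<^sup>2*n\<^sup>2 + 8*l*P*T" using amgm mm by linarith
  also have "\<dots> = n\<^sup>2 - 4*P*C\<^sup>2 + l\<^sup>2*n\<^sup>2 + 8*l*P*T" using X(2) by (simp add: n_def P_def)
  also have "\<dots> \<le> 2*k*l*n\<^sup>2" by (rule main)
  also have "\<dots> = 2*l*n*(k*n)" by (simp add: power2_eq_square)
  finally have "2*l*n*(X + 2*m) \<le> 2*l*n*(k*n)" .
  then have "X + 2*m \<le> k*n" using l np by (simp add: mult_le_cancel_left_pos)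
  then show ?thesis by (simp add: n_def)
qed

lemma alg_R2:
  fixes r \<rho> X m S T K :: real
  assumes rp: "r > 0" "\<rho> > 0" and X: "X \<ge> 0" "4*r*\<rho>*S\<^sup>2 \<le> X\<^sup>2" and S: "S \<ge> 0"
    and m: "m \<ge> 0" "m*(r+\<rho>) \<le> 2*r*\<rho>*T" and T: "0 \<le> T" "T \<le> K*S" and K: "K \<ge> 0"
  shows "2*m \<le> K*X"
proof -
  have P: "4*r*\<rho> \<le> (r+\<rho>)\<^sup>2"
  proof -
    have "0 \<le> (r - \<rho>)\<^sup>2" by simp
    then show ?thesis by (simp add: power2_eq_square algebra_simps)
  qed
  have "2*m*(r+\<rho>) \<le> 4*r*\<rho>*T" using m(2) by linarith
  moreover have "0 \<le> 2*m*(r+\<rho>)" using m rp by simp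
  ultimately have "(2*m*(r+\<rho>))\<^sup>2 \<le> (4*r*\<rho>*T)\<^sup>2" by (rule power_mono)
  then have h1: "(2*m)\<^sup>2 * (r+\<rho>)\<^sup>2 \<le> (4*r*\<rho>) * ((4*r*\<rho>) * T\<^sup>2)"
    by (simp add: power_mult_distrib power2_eq_square algebra_simps)
  have h0: "(2*m)\<^sup>2 * (4*r*\<rho>) \<le> (2*m)\<^sup>2 * (r+\<rho>)\<^sup>2" using P by (intro mult_left_mono) auto
  have "(4*r*\<rho>) * ((4*r*\<rho>) * T\<^sup>2) = ((4*r*\<rho>) * T\<^sup>2) * (4*r*\<rho>)" by (rule mult.commute)
  then have h3: "(2*m)\<^sup>2 * (4*r*\<rho>) \<le> ((4*r*\<rho>) * T\<^sup>2) * (4*r*\<rho>)" using h0 h1 by linarith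
  have h2: "(2*m)\<^sup>2 \<le> (4*r*\<rho>) * T\<^sup>2" using rp by (intro mult_right_le_imp_le[OF h3]) simp
  have "T\<^sup>2 \<le> (K*S)\<^sup>2" using T by (intro power_mono) auto
  then have "(4*r*\<rho>) * T\<^sup>2 \<le> (4*r*\<rho>) * (K*S)\<^sup>2" using rp by (intro mult_left_mono) auto
  also have "\<dots> = K\<^sup>2 * (4*r*\<rho>*S\<^sup>2)" by (simp add: power_mult_distrib)
  also have "\<dots> \<le> K\<^sup>2 * X\<^sup>2" using X by (intro mult_left_mono) auto
  also have "\<dots> = (K*X)\<^sup>2" by (simp add: power_mult_distrib)
  finally have "(2*m)\<^sup>2 \<le> (K*X)\<^sup>2" using h2 by linarith
  then show ?thesis by (rule power2_le_imp_le) (use K X in simp)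
qed

lemma key_8: 
  fixes u a h1 h2 :: real
  assumes "u \<ge> 0" "a \<ge> 0" "h1 \<ge> 0" "h2 \<ge> 0" "u*h1 \<le> a*h2"
  shows "8*u*h1 \<le> (a+u)\<^sup>2 + (h1+h2)\<^sup>2"
proof -
  have e: "(u*h2 + a*h1)\<^sup>2 = (u*h2 - a*h1)\<^sup>2 + 4*(u*h2)*(a*h1)" by (simp add: power2_eq_square algebra_simps)
  have "0 \<le> (u*h2 - a*h1)\<^sup>2" by simp
  then have "4*(u*h2)*(a*h1) \<le> (u*h2 + a*h1)\<^sup>2" unfolding e by linarith
  moreover have "(u*h1)*(u*h1) \<le> (u*h1)*(a*h2)" using assms by (intro mult_left_mono) auto
  moreover have "(2*(u*h1))\<^sup>2 = 4*((u*h1)*(u*h1))" by (simp add: power2_eq_square)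
  moreover have "4*(u*h2)*(a*h1) = 4*((u*h1)*(a*h2))" by (simp add: algebra_simps)
  ultimately have "(2*(u*h1))\<^sup>2 \<le> (u*h2 + a*h1)\<^sup>2" by linarith
  then have c1: "2*(u*h1) \<le> u*h2 + a*h1" by (rule power2_le_imp_le) (use assms in simp)
  have c2: "2*(a+u)*(h1+h2) \<le> (a+u)\<^sup>2 + (h1+h2)\<^sup>2"
  proof -
    have "0 \<le> (a + u - (h1+h2))\<^sup>2" by simp
    moreover have "(a + u - (h1+h2))\<^sup>2 = (a+u)\<^sup>2 + (h1+h2)\<^sup>2 - 2*(a+u)*(h1+h2)"
      by (simp add: power2_eq_square algebra_simps)
    ultimately show ?thesis by linarith
  qed
  have "(a+u)*(h1+h2) = u*h1 + (u*h2 + a*h1) + a*h2" by (simp add: algebra_simps)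
  then show ?thesis using c1 c2 assms(5) by linarith
qed

lemma alg_same:
  fixes x y :: complex and m \<sigma> k u :: real
  assumes s: "Im x * Im y \<ge> 0" and a: "Re x \<ge> 0" and m: "m \<ge> 0" "m \<le> \<bar>Im x\<bar>"
    and u: "u = max 0 (- Re y)" and m2: "m \<le> \<bar>Im y\<bar> + 2*\<sigma>*u"
    and uh: "u * \<bar>Im x\<bar> \<le> Re x * \<bar>Im y\<bar>" and sg: "\<sigma> \<ge> 0" and k: "k \<ge> 0" "k\<^sup>2 = 2 + 2*\<sigma>"
  shows "cmod (x - y) + 2*m \<le> k * cmod (x - cnj y)"
proof -
  define A where "A = cmod (x - y)"
  define B where "B = cmod (x - cnj y)"
  define h1 where "h1 = \<bar>Im x\<bar>"
  define h2 where "h2 = \<bar>Im y\<bar>"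
  have hh: "Im x * Im y = h1 * h2" using s by (simp add: h1_def h2_def abs_mult[symmetric])
  have A2: "A\<^sup>2 = (Re x - Re y)\<^sup>2 + (Im x - Im y)\<^sup>2" by (simp add: A_def cmod_power2)
  have B2: "B\<^sup>2 = (Re x - Re y)\<^sup>2 + (Im x + Im y)\<^sup>2" by (simp add: B_def cmod_power2)
  have AB: "A\<^sup>2 = B\<^sup>2 - 4*h1*h2" using A2 B2 hh by (simp add: power2_eq_square algebra_simps)
  have m2': "m \<le> h2 + 2*\<sigma>*u" using m2 by (simp add: h2_def)
  have u0: "u \<ge> 0" using u by simp
  have mm: "m * m \<le> h1 * (h2 + 2*\<sigma>*u)" using m m2' by (intro mult_mono) (auto simp: h1_def)
  have u8: "8*u*h1 \<le> B\<^sup>2"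
  proof (cases "u = 0")
    case True then show ?thesis by simp
  next
    case False
    then have uu: "u = - Re y" using u by auto
    have "8*u*h1 \<le> (Re x + u)\<^sup>2 + (h1+h2)\<^sup>2"
      using key_8[of u "Re x" h1 h2] u0 a uh by (simp add: h1_def h2_def)
    moreover have "(Im x + Im y)\<^sup>2 = (h1+h2)\<^sup>2"
      using hh by (simp add: power2_eq_square algebra_simps h1_def h2_def abs_mult_self_eq)
    ultimately show ?thesis using B2 uu by simp
  qed
  have "(A + 2*m)\<^sup>2 \<le> 2*A\<^sup>2 + 8*(m*m)"
  proof -
    have "0 \<le> (A - 2*m)\<^sup>2" by simp
    then show ?thesis by (simp add: power2_eq_square algebra_simps)
  qed
  also have "\<dots> \<le> 2*B\<^sup>2 + 16*\<sigma>*(u*h1)"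
    using AB mm by (simp add: algebra_simps)
  also have "\<dots> \<le> 2*B\<^sup>2 + 2*\<sigma>*B\<^sup>2"
  proof -
    have "\<sigma>*(8*(u*h1)) \<le> \<sigma>*B\<^sup>2" using u8 sg by (intro mult_left_mono) auto
    then show ?thesis by (simp add: algebra_simps)
  qed
  also have "\<dots> = (k*B)\<^sup>2" using k by (simp add: power_mult_distrib algebra_simps)
  finally have "(A + 2*m)\<^sup>2 \<le> (k*B)\<^sup>2" .
  then have "A + 2*m \<le> k*B" by (rule power2_le_imp_le) (use k in \<open>simp add: B_def\<close>)
  then show ?thesis by (simp add: A_def B_def)
qed

definition Fm :: "real \<Rightarrow> complex \<Rightarrow> complex" where "Fm \<theta> z = cis \<theta> * cnj z"

lemma cis_inv_aux: "cis \<theta> * cis (-\<theta>) = 1"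
  by (simp add: cis_mult)

lemma Fm_Fm [simp]: "Fm \<theta> (Fm \<theta> z) = z"
proof -
  have "Fm \<theta> (Fm \<theta> z) = (cis \<theta> * cis (-\<theta>)) * z" unfolding Fm_def
    by (simp only: complex_cnj_mult complex_cnj_cnj cis_cnj mult.assoc)
  then show ?thesis by (simp only: cis_inv_aux mult_1_left)
qed

lemma Fm_dist: "cmod (Fm \<theta> a - Fm \<theta> b) = cmod (a - b)"
proof -
  have "Fm \<theta> a - Fm \<theta> b = cis \<theta> * cnj (a - b)" by (simp add: Fm_def algebra_simps)
  moreover have "cmod (cnj (a - b)) = cmod (a - b)" by (rule complex_mod_cnj)
  ultimately show ?thesis by (simp add: norm_mult)
qed

lemma Fm_polar: "Fm \<theta> (of_real s * cis \<alpha>) = of_real s * cis (\<theta> - \<alpha>)"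
proof -
  have "Fm \<theta> (of_real s * cis \<alpha>) = of_real s * (cis \<theta> * cis (-\<alpha>))" unfolding Fm_def
    by (simp only: complex_cnj_mult complex_cnj_complex_of_real cis_cnj mult.left_commute)
  also have "cis \<theta> * cis (-\<alpha>) = cis (\<theta> - \<alpha>)" by (simp add: cis_mult)
  finally show ?thesis .
qed

lemma Fm_rays: "w \<in> rays \<theta> \<Longrightarrow> Fm \<theta> w \<in> rays \<theta>"
proof -
  assume "w \<in> rays \<theta>"
  then obtain t where t: "t \<ge> 0" "w = of_real t \<or> w = of_real t * cis \<theta>" unfolding rays_def by blast
  show ?thesis
  proof (cases "w = of_real t")
    case True
    then have "Fm \<theta> w = of_real t * cis \<theta>" by (simp add: Fm_def mult.commute)
    then show ?thesis using t unfolding rays_def by blast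
  next
    case False
    then have "w = of_real t * cis \<theta>" using t by blast
    then have "Fm \<theta> w = of_real t * cis 0" using Fm_polar[of \<theta> t \<theta>] by simp
    then show ?thesis using t unfolding rays_def by auto
  qed
qed

lemma of_real_in_rays: "t \<ge> 0 \<Longrightarrow> complex_of_real t \<in> rays \<theta>"
  unfolding rays_def by blast

lemma cis_in_rays: "t \<ge> 0 \<Longrightarrow> complex_of_real t * cis \<theta> \<in> rays \<theta>"
  unfolding rays_def by blast

lemma dist_ray0:
  assumes "s > 0" "0 \<le> \<alpha>"
  shows "\<exists>w\<in>rays \<theta>. cmod (of_real s * cis \<alpha> - w) \<le> s * sp \<alpha>"
proof (cases "\<alpha> \<le> pi/2")
  case True
  have c: "cos \<alpha> \<ge> 0" using True assms by (intro cos_ge_zero) auto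
  have si: "sin \<alpha> \<ge> 0" using True assms by (intro sin_ge_zero) auto
  have "of_real s * cis \<alpha> - of_real (s * cos \<alpha>) = \<i> * of_real (s * sin \<alpha>)"
    by (simp add: complex_eq_iff cis.ctr)
  then have "cmod (of_real s * cis \<alpha> - of_real (s * cos \<alpha>)) = s * sin \<alpha>"
    using assms si by (simp add: norm_mult)
  moreover have "of_real (s * cos \<alpha>) \<in> rays \<theta>" using c assms by (intro of_real_in_rays) simp
  ultimately show ?thesis using True by (intro bexI[of _ "of_real (s * cos \<alpha>)"]) (auto simp: sp_def)
next
  case False
  have "(0::complex) \<in> rays \<theta>" using of_real_in_rays[of 0] by simp
  then show ?thesis using False assms by (intro bexI[of _ 0]) (auto simp: sp_def norm_mult)
qed

lemma dist_rayth:
  assumes "s > 0" "\<alpha> \<le> \<theta>"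
  shows "\<exists>w\<in>rays \<theta>. cmod (of_real s * cis \<alpha> - w) \<le> s * sp (\<theta> - \<alpha>)"
proof -
  obtain w where w: "w \<in> rays \<theta>" "cmod (of_real s * cis (\<theta> - \<alpha>) - w) \<le> s * sp (\<theta> - \<alpha>)"
    using dist_ray0[of s "\<theta> - \<alpha>" \<theta>] assms by auto
  have "cmod (of_real s * cis \<alpha> - Fm \<theta> w) = cmod (Fm \<theta> (of_real s * cis (\<theta> - \<alpha>)) - Fm \<theta> w)"
    by (simp add: Fm_polar)
  also have "\<dots> = cmod (of_real s * cis (\<theta> - \<alpha>) - w)" by (rule Fm_dist)
  finally show ?thesis using w Fm_rays[OF w(1)] by (intro bexI[of _ "Fm \<theta> w"]) auto
qed

lemma aux_id:
  fixes a b c q p :: real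
  assumes "p = a*c + b*q"
  shows "(a - p*c)\<^sup>2 + (b - p*q)\<^sup>2 = (a*q - b*c)\<^sup>2 + (1 - (q\<^sup>2 + c\<^sup>2)) * (a\<^sup>2 + b\<^sup>2 - p\<^sup>2)"
  by (simp add: assms power2_eq_square algebra_simps)

lemma dist_cart:
  fixes y :: complex and \<sigma> hs \<theta> :: real
  assumes c: "cos \<theta> = 2*\<sigma>\<^sup>2 - 1" and s: "sin \<theta> = - 2*\<sigma>*hs" and hs: "0 \<le> hs" "hs \<le> 1"
    and sg: "0 \<le> \<sigma>" "\<sigma> \<le> 1"
  shows "\<exists>w\<in>rays \<theta>. cmod (y - w) \<le> \<bar>Im y\<bar> + 2*\<sigma>*max 0 (- Re y)"
proof (cases "Re y \<ge> 0")
  case True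
  have "cmod (y - of_real (Re y)) = \<bar>Im y\<bar>"
  proof -
    have "y - of_real (Re y) = \<i> * of_real (Im y)" by (simp add: complex_eq_iff)
    then show ?thesis by (simp add: norm_mult)
  qed
  then show ?thesis using True of_real_in_rays[OF True, of \<theta>] by (intro bexI[of _ "of_real (Re y)"]) auto
next
  case False
  define u where "u = - Re y"
  have up: "u > 0" using False by (simp add: u_def)
  have mx: "max 0 (- Re y) = u" using up by (simp add: u_def)
  define p where "p = Re y * cos \<theta> + Im y * sin \<theta>"
  show ?thesis
  proof (cases "p \<ge> 0")
    case True
    define w where "w = of_real p * cis \<theta>"
    have "(cmod (y - w))\<^sup>2 = (Re y - p * cos \<theta>)\<^sup>2 + (Im y - p * sin \<theta>)\<^sup>2"
      by (simp add: w_def cmod_power2 cis.ctr)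
    also have "\<dots> = (Re y * sin \<theta> - Im y * cos \<theta>)\<^sup>2 + (1 - ((sin \<theta>)\<^sup>2 + (cos \<theta>)\<^sup>2)) * ((Re y)\<^sup>2 + (Im y)\<^sup>2 - p\<^sup>2)"
      by (rule aux_id) (simp add: p_def)
    also have "\<dots> = (Re y * sin \<theta> - Im y * cos \<theta>)\<^sup>2" by simp
    finally have "sqrt ((cmod (y - w))\<^sup>2) = sqrt ((Re y * sin \<theta> - Im y * cos \<theta>)\<^sup>2)" by simp
    then have "cmod (y - w) = \<bar>Re y * sin \<theta> - Im y * cos \<theta>\<bar>" by simp
    also have "\<dots> \<le> \<bar>Re y\<bar> * \<bar>sin \<theta>\<bar> + \<bar>Im y\<bar> * \<bar>cos \<theta>\<bar>"
      by (metis abs_mult abs_triangle_ineq4)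
    also have "\<dots> \<le> u * (2*\<sigma>) + \<bar>Im y\<bar> * 1"
    proof -
      have "\<bar>sin \<theta>\<bar> = 2*\<sigma>*hs" using s sg hs by (simp add: abs_mult)
      also have "\<dots> \<le> 2*\<sigma>*1" using sg hs by (intro mult_left_mono) auto
      finally have a: "\<bar>sin \<theta>\<bar> \<le> 2*\<sigma>" by simp
      have b: "\<bar>cos \<theta>\<bar> \<le> 1" by simp
      have "\<bar>Re y\<bar> = u" using up by (simp add: u_def)
      then show ?thesis using a b by (intro add_mono mult_mono) auto
    qed
    finally show ?thesis using mx True cis_in_rays[OF True, of \<theta>] unfolding w_def
      by (intro bexI[of _ "of_real p * cis \<theta>"]) (auto simp: algebra_simps)
  next
    case False
    have "u * (1 - 2*\<sigma>\<^sup>2) < Im y * (2*\<sigma>*hs)" using False c s by (simp add: p_def u_def algebra_simps)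
    also have "\<dots> \<le> \<bar>Im y\<bar> * (2*\<sigma>)"
    proof -
      have "Im y * (2*\<sigma>*hs) \<le> \<bar>Im y\<bar> * (2*\<sigma>*hs)" using sg hs by (intro mult_right_mono) auto
      also have "\<dots> \<le> \<bar>Im y\<bar> * (2*\<sigma>)" using sg hs by (intro mult_left_mono) (auto simp: mult_left_le)
      finally show ?thesis .
    qed
    finally have l: "u < 2*\<sigma>*\<bar>Im y\<bar> + 2*\<sigma>\<^sup>2*u" by (simp add: algebra_simps)
    have "u * u \<le> u * (4*\<sigma>*\<bar>Im y\<bar> + 4*\<sigma>\<^sup>2*u)"
    proof -
      have "0 \<le> \<sigma>*\<bar>Im y\<bar>" "0 \<le> \<sigma>\<^sup>2*u" using sg up by auto
      then have "u \<le> 4*\<sigma>*\<bar>Im y\<bar> + 4*\<sigma>\<^sup>2*u" using l by linarith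
      then show ?thesis using up by (intro mult_left_mono) auto
    qed
    moreover have "(cmod y)\<^sup>2 = u*u + (Im y)\<^sup>2" unfolding cmod_power2 by (simp add: u_def power2_eq_square)
    moreover have "(\<bar>Im y\<bar> + 2*\<sigma>*u)\<^sup>2 = (Im y)\<^sup>2 + u * (4*\<sigma>*\<bar>Im y\<bar> + 4*\<sigma>\<^sup>2*u)"
      by (simp add: power2_eq_square algebra_simps)
    ultimately have "(cmod y)\<^sup>2 \<le> (\<bar>Im y\<bar> + 2*\<sigma>*u)\<^sup>2" by linarith
    then have "cmod y \<le> \<bar>Im y\<bar> + 2*\<sigma>*u" by (rule power2_le_imp_le) (use sg up in simp)
    then show ?thesis using mx of_real_in_rays[of 0 \<theta>] by (intro bexI[of _ 0]) auto
  qed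
qed

lemma aux_pol:
  fixes r \<rho> c1 q1 c2 q2 :: real
  shows "(r*c1 - \<rho>*c2)\<^sup>2 + (r*q1 - \<rho>*q2)\<^sup>2 = r\<^sup>2*(c1\<^sup>2+q1\<^sup>2) + \<rho>\<^sup>2*(c2\<^sup>2+q2\<^sup>2) - 2*r*\<rho>*(c1*c2 + q1*q2)"
  by (simp add: power2_eq_square algebra_simps)

lemma polar_dist2:
  "(cmod (of_real r * cis \<phi> - of_real \<rho> * cis \<psi>))\<^sup>2 = r\<^sup>2 + \<rho>\<^sup>2 - 2*r*\<rho>*cos (\<phi> - \<psi>)"
proof -
  have "(cmod (of_real r * cis \<phi> - of_real \<rho> * cis \<psi>))\<^sup>2 = (r*cos \<phi> - \<rho>*cos \<psi>)\<^sup>2 + (r* sin \<phi> - \<rho>* sin \<psi>)\<^sup>2"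
    unfolding cmod_power2 by simp
  also have "\<dots> = r\<^sup>2*((cos \<phi>)\<^sup>2+(sin \<phi>)\<^sup>2) + \<rho>\<^sup>2*((cos \<psi>)\<^sup>2+(sin \<psi>)\<^sup>2) - 2*r*\<rho>*(cos \<phi>*cos \<psi> + sin \<phi>* sin \<psi>)"
    by (rule aux_pol)
  also have "\<dots> = r\<^sup>2 + \<rho>\<^sup>2 - 2*r*\<rho>*cos (\<phi> - \<psi>)" by (simp add: cos_diff)
  finally show ?thesis .
qed

lemma k_facts:
  assumes "pi < \<theta>" "\<theta> < 2*pi"
  shows "2 \<le> (2 * sin (\<theta>/4))\<^sup>2" "0 \<le> 2 * sin (\<theta>/4)" "1 < 2 * sin (\<theta>/4)"
proof -
  note c = theta_consts[OF assms]
  show "2 \<le> (2 * sin (\<theta>/4))\<^sup>2" using c(1) c(3) by linarith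
  show "0 \<le> 2 * sin (\<theta>/4)" using c(10) by linarith
  show "1 < 2 * sin (\<theta>/4)" using c(1) c(4) by linarith
qed

lemma V_ord:
  assumes th: "pi < \<theta>" "\<theta> < 2*pi" and rp: "r > 0" "\<rho> > 0" and ang: "0 < \<phi>" "\<phi> \<le> \<psi>" "\<psi> < \<theta>"
    and hx: "\<And>w. w \<in> rays \<theta> \<Longrightarrow> m \<le> cmod (of_real r * cis \<phi> - w)"
    and hy: "\<And>w. w \<in> rays \<theta> \<Longrightarrow> m \<le> cmod (of_real \<rho> * cis \<psi> - w)"
  shows "cmod (of_real r * cis \<phi> - of_real \<rho> * cis \<psi>) + 2*m \<le> 2 * sin (\<theta>/4) * (r + \<rho>)"
proof -
  obtain w1 where "w1 \<in> rays \<theta>" "cmod (of_real r * cis \<phi> - w1) \<le> r * sp \<phi>"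
    using dist_ray0[of r \<phi> \<theta>] rp ang by auto
  then have m1: "m \<le> r * sp \<phi>" using hx by fastforce
  obtain w2 where "w2 \<in> rays \<theta>" "cmod (of_real \<rho> * cis \<psi> - w2) \<le> \<rho> * sp (\<theta> - \<psi>)"
    using dist_rayth[of \<rho> \<psi> \<theta>] rp ang by auto
  then have m2: "m \<le> \<rho> * sp (\<theta> - \<psi>)" using hy by fastforce
  define \<gamma> where "\<gamma> = \<psi> - \<phi>"
  define T where "T = sp ((\<theta> - \<gamma>)/2)"
  have "sp \<phi> + sp (\<theta> - \<psi>) \<le> 2 * sp ((\<phi> + (\<theta> - \<psi>))/2)" using ang by (intro sp_concave) auto
  moreover have "(\<phi> + (\<theta> - \<psi>))/2 = (\<theta> - \<gamma>)/2" by (simp add: \<gamma>_def)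
  ultimately have AB: "sp \<phi> + sp (\<theta> - \<psi>) \<le> 2 * T" by (simp add: T_def)
  have "m * \<rho> \<le> r * sp \<phi> * \<rho>" using m1 rp by (intro mult_right_mono) auto
  moreover have "m * r \<le> \<rho> * sp (\<theta> - \<psi>) * r" using m2 rp by (intro mult_right_mono) auto
  moreover have "r*\<rho>*(sp \<phi> + sp (\<theta> - \<psi>)) \<le> r*\<rho>*(2*T)" using AB rp by (intro mult_left_mono) auto
  ultimately have mT: "m*(r+\<rho>) \<le> 2*r*\<rho>*T" by (simp add: algebra_simps)
  define C where "C = cos (\<gamma>/2)"
  define S where "S = sin (\<gamma>/2)"
  have cg: "cos (\<phi> - \<psi>) = 2*C\<^sup>2 - 1"
  proof -
    have "cos (\<phi> - \<psi>) = cos \<gamma>" by (simp add: \<gamma>_def cos_diff mult.commute)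
    also have "\<dots> = cos (2*(\<gamma>/2))" by simp
    also have "\<dots> = 2*C\<^sup>2 - 1" unfolding C_def by (rule cos_double_cos)
    finally show ?thesis .
  qed
  have X2: "(cmod (of_real r * cis \<phi> - of_real \<rho> * cis \<psi>))\<^sup>2 = (r+\<rho>)\<^sup>2 - 4*r*\<rho>*C\<^sup>2"
    unfolding polar_dist2 cg by (simp add: power2_eq_square algebra_simps)
  have SC: "S\<^sup>2 + C\<^sup>2 = 1" by (simp add: S_def C_def)
  have S0: "0 \<le> S" unfolding S_def using ang th by (intro sin_ge_zero) (auto simp: \<gamma>_def)
  have S1: "S \<le> 1" by (simp add: S_def)
  have T0: "0 \<le> T" unfolding T_def using ang by (intro sp_nonneg) (auto simp: \<gamma>_def)
  have T1: "T \<le> 1" by (simp add: T_def sp_le1)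
  have ST: "S + T \<le> 2 * sin (\<theta>/4)" unfolding S_def T_def using ang th
    by (intro trig_V) (auto simp: \<gamma>_def)
  show ?thesis using alg_V[OF rp norm_ge_zero X2 SC S0 S1 T0 T1 ST k_facts(1,2)[OF th] mT] .
qed

lemma V_gen:
  assumes th: "pi < \<theta>" "\<theta> < 2*pi" and rp: "r > 0" "\<rho> > 0" and ang: "0 < \<phi>" "\<phi> < \<theta>" "0 < \<psi>" "\<psi> < \<theta>"
    and hx: "\<And>w. w \<in> rays \<theta> \<Longrightarrow> m \<le> cmod (of_real r * cis \<phi> - w)"
    and hy: "\<And>w. w \<in> rays \<theta> \<Longrightarrow> m \<le> cmod (of_real \<rho> * cis \<psi> - w)"
  shows "cmod (of_real r * cis \<phi> - of_real \<rho> * cis \<psi>) + 2*m \<le> 2 * sin (\<theta>/4) * (r + \<rho>)"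
proof (cases "\<phi> \<le> \<psi>")
  case True
  then show ?thesis using V_ord[OF th rp, of \<phi> \<psi> m] ang hx hy by auto
next
  case False
  have "cmod (of_real \<rho> * cis \<psi> - of_real r * cis \<phi>) + 2*m \<le> 2 * sin (\<theta>/4) * (\<rho> + r)"
    using V_ord[OF th rp(2) rp(1), of \<psi> \<phi> m] False ang hx hy by auto
  then show ?thesis by (simp add: norm_minus_commute add.commute)
qed

lemma R2_ord:
  assumes th: "pi < \<theta>" "\<theta> < 2*pi" and rp: "r > 0" "\<rho> > 0"
    and ang: "pi < \<phi>" "\<phi> < \<theta>" "0 < \<psi>" "\<psi> < pi" and cc: "cos \<phi> + cos \<psi> > 0" and m0: "m \<ge> 0"
    and hx: "\<And>w. w \<in> rays \<theta> \<Longrightarrow> m \<le> cmod (of_real r * cis \<phi> - w)"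
    and hy: "\<And>w. w \<in> rays \<theta> \<Longrightarrow> m \<le> cmod (of_real \<rho> * cis \<psi> - w)"
  shows "2*m \<le> (2 * sin (\<theta>/4) - 1) * cmod (of_real r * cis \<phi> - of_real \<rho> * cis \<psi>)"
proof -
  obtain w1 where "w1 \<in> rays \<theta>" "cmod (of_real \<rho> * cis \<psi> - w1) \<le> \<rho> * sp \<psi>"
    using dist_ray0[of \<rho> \<psi> \<theta>] rp ang by auto
  then have m1: "m \<le> \<rho> * sp \<psi>" using hy by fastforce
  obtain w2 where "w2 \<in> rays \<theta>" "cmod (of_real r * cis \<phi> - w2) \<le> r * sp (\<theta> - \<phi>)"
    using dist_rayth[of r \<phi> \<theta>] rp ang by auto
  then have m2: "m \<le> r * sp (\<theta> - \<phi>)" using hx by fastforce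
  define g where "g = (2*pi - \<phi> + \<psi>)/2"
  define T where "T = sp ((\<psi> + (\<theta> - \<phi>))/2)"
  have AB: "sp \<psi> + sp (\<theta> - \<phi>) \<le> 2 * T" unfolding T_def using ang by (intro sp_concave) auto
  have "m * r \<le> \<rho> * sp \<psi> * r" using m1 rp by (intro mult_right_mono) auto
  moreover have "m * \<rho> \<le> r * sp (\<theta> - \<phi>) * \<rho>" using m2 rp by (intro mult_right_mono) auto
  moreover have "r*\<rho>*(sp \<psi> + sp (\<theta> - \<phi>)) \<le> r*\<rho>*(2*T)" using AB rp by (intro mult_left_mono) auto
  ultimately have mT: "m*(r+\<rho>) \<le> 2*r*\<rho>*T" by (simp add: algebra_simps)
  have "cos (pi - \<psi>) < cos (2*pi - \<phi>)"
  proof -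
    have "cos (2*pi - \<phi>) = cos \<phi>" by (simp add: cos_diff)
    moreover have "cos (pi - \<psi>) = - cos \<psi>" by simp
    ultimately show ?thesis using cc by simp
  qed
  then have "2*pi - \<phi> < pi - \<psi>" using ang th by (subst (asm) cos_mono_less_eq) auto
  then have g1: "g < pi/2" by (simp add: g_def)
  have g0: "0 < g" using ang th by (simp add: g_def)
  have he: "(\<psi> + (\<theta> - \<phi>))/2 = g - pi + \<theta>/2" by (simp add: g_def field_simps)
  have hle: "g - pi + \<theta>/2 \<le> pi/2" using g1 th by simp
  have TT: "T = sin (g - pi + \<theta>/2)" unfolding T_def he using hle by (simp add: sp_def)
  have T0: "0 \<le> T" unfolding T_def using ang by (intro sp_nonneg) auto
  have TK: "T \<le> (2 * sin (\<theta>/4) - 1) * sin g" unfolding TT using th g0 g1 by (intro trig_R2) auto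
  have cg: "cos (\<phi> - \<psi>) = 1 - 2 * (sin g)\<^sup>2"
  proof -
    have "cos (\<phi> - \<psi>) = cos (2*pi - (\<phi> - \<psi>))" by (simp add: cos_diff)
    also have "\<dots> = cos (2*g)"
    proof -
      have "2*g = 2*pi - (\<phi> - \<psi>)" by (simp add: g_def)
      then show ?thesis by simp
    qed
    also have "\<dots> = 1 - 2 * (sin g)\<^sup>2" by (rule cos_double_sin)
    finally show ?thesis .
  qed
  have X2: "4*r*\<rho>*(sin g)\<^sup>2 \<le> (cmod (of_real r * cis \<phi> - of_real \<rho> * cis \<psi>))\<^sup>2"
  proof -
    have "0 \<le> (r - \<rho>)\<^sup>2" by simp
    moreover have "r\<^sup>2 + \<rho>\<^sup>2 - 2*r*\<rho>*cos (\<phi> - \<psi>) = (r - \<rho>)\<^sup>2 + 4*r*\<rho>*(sin g)\<^sup>2"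
      unfolding cg by (simp add: power2_eq_square algebra_simps)
    ultimately show ?thesis unfolding polar_dist2 by linarith
  qed
  have S0: "0 \<le> sin g" using g0 g1 by (intro sin_ge_zero) auto
  have K0: "0 \<le> 2 * sin (\<theta>/4) - 1" using k_facts(3)[OF th] by simp
  show ?thesis by (rule alg_R2[OF rp norm_ge_zero X2 S0 m0 mT T0 TK K0])
qed

lemma same_ord:
  assumes th: "pi < \<theta>" "\<theta> < 2*pi" and rp: "r > 0" "\<rho> > 0"
    and s: "Im (of_real r * cis \<phi>) * Im (of_real \<rho> * cis \<psi>) \<ge> 0"
    and a: "cos \<phi> \<ge> 0" and cc: "cos \<phi> + cos \<psi> > 0" and m0: "m \<ge> 0"
    and hx: "\<And>w. w \<in> rays \<theta> \<Longrightarrow> m \<le> cmod (of_real r * cis \<phi> - w)"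
    and hy: "\<And>w. w \<in> rays \<theta> \<Longrightarrow> m \<le> cmod (of_real \<rho> * cis \<psi> - w)"
  shows "cmod (of_real r * cis \<phi> - of_real \<rho> * cis \<psi>) + 2*m \<le> 2 * sin (\<theta>/4) * cmod (of_real r * cis \<phi> - cnj (of_real \<rho> * cis \<psi>))"
proof -
  define x where "x = of_real r * cis \<phi>"
  define y where "y = of_real \<rho> * cis \<psi>"
  define \<sigma> where "\<sigma> = - cos (\<theta>/2)"
  define u where "u = max 0 (- Re y)"
  note c = theta_consts[OF th, folded \<sigma>_def]
  have Rx: "Re x = r * cos \<phi>" "Im x = r * sin \<phi>" by (simp_all add: x_def)
  have Ry: "Re y = \<rho> * cos \<psi>" "Im y = \<rho> * sin \<psi>" by (simp_all add: y_def)
  have rx: "Re x \<ge> 0" using Rx rp a by simp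
  have "cmod (x - of_real (Re x)) = \<bar>Im x\<bar>"
  proof -
    have "x - of_real (Re x) = \<i> * of_real (Im x)" by (simp add: complex_eq_iff)
    then show ?thesis by (simp add: norm_mult)
  qed
  then have m1: "m \<le> \<bar>Im x\<bar>" using hx[of "of_real (Re x)"] of_real_in_rays[OF rx] by (simp add: x_def)
  obtain w where w: "w \<in> rays \<theta>" "cmod (y - w) \<le> \<bar>Im y\<bar> + 2*\<sigma>*max 0 (- Re y)"
    using dist_cart[OF c(6) c(7) c(8) c(9)] c(1,2) by fastforce
  have m2: "m \<le> \<bar>Im y\<bar> + 2*\<sigma>*u" using hy[OF w(1)] w(2) by (simp add: y_def u_def)
  have uh: "u * \<bar>Im x\<bar> \<le> Re x * \<bar>Im y\<bar>"
  proof (cases "Re y \<ge> 0")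
    case True
    then show ?thesis using rx by (simp add: u_def)
  next
    case False
    then have cp: "cos \<psi> < 0" using Ry rp mult_nonneg_nonneg[of \<rho> "cos \<psi>"] by fastforce
    have c1: "- cos \<psi> \<le> cos \<phi>" using cc by simp
    have "(cos \<psi>)\<^sup>2 \<le> (cos \<phi>)\<^sup>2"
    proof -
      have "(- cos \<psi>)\<^sup>2 \<le> (cos \<phi>)\<^sup>2" using c1 cp by (intro power_mono) auto
      then show ?thesis by simp
    qed
    then have "(sin \<phi>)\<^sup>2 \<le> (sin \<psi>)\<^sup>2" by (simp add: sin_squared_eq)
    then have "\<bar>sin \<phi>\<bar> \<le> \<bar>sin \<psi>\<bar>" using abs_le_square_iff by blast
    then have "(- cos \<psi>) * \<bar>sin \<phi>\<bar> \<le> cos \<phi> * \<bar>sin \<psi>\<bar>" using c1 cp by (intro mult_mono) auto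
    then have "(\<rho>*r) * ((- cos \<psi>) * \<bar>sin \<phi>\<bar>) \<le> (\<rho>*r) * (cos \<phi> * \<bar>sin \<psi>\<bar>)" using rp by (intro mult_left_mono) auto
    moreover have "u = - (\<rho> * cos \<psi>)" using False Ry by (simp add: u_def)
    ultimately show ?thesis using rp by (simp add: Rx Ry abs_mult algebra_simps)
  qed
  have ss: "Im x * Im y \<ge> 0" using s by (simp add: x_def y_def)
  have "cmod (x - y) + 2*m \<le> 2 * sin (\<theta>/4) * cmod (x - cnj y)"
    using alg_same[OF ss rx m0 m1 u_def m2 uh] c(1) k_facts(2)[OF th] c(3) by (simp add: \<sigma>_def)
  then show ?thesis by (simp add: x_def y_def)
qed

lemma lowD:
  assumes "r \<ge> 0"
  shows "r - t * cos \<phi> \<le> cmod (of_real r * cis \<phi> - of_real t)"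
proof -
  have e: "(of_real r * cis \<phi> - of_real t) * cis (-\<phi>) = of_real r - of_real t * cis (-\<phi>)"
    by (simp add: algebra_simps cis_mult)
  have "r - t * cos \<phi> = Re ((of_real r * cis \<phi> - of_real t) * cis (-\<phi>))" unfolding e by simp
  also have "\<dots> \<le> cmod ((of_real r * cis \<phi> - of_real t) * cis (-\<phi>))" by (rule complex_Re_le_cmod)
  also have "\<dots> = cmod (of_real r * cis \<phi> - of_real t)" by (simp add: norm_mult)
  finally show ?thesis .
qed

lemma cnj_trick: "cmod (of_real t - y) = cmod (of_real t - cnj y)"
proof -
  have "cnj (of_real t - y) = of_real t - cnj y" by simp
  then show ?thesis by (metis complex_mod_cnj)
qed

lemma core0:
  assumes th: "pi < \<theta>" "\<theta> < 2*pi" and rp: "r > 0" "\<rho> > 0"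
    and ang: "0 < \<phi>" "\<phi> < \<theta>" "0 < \<psi>" "\<psi> < \<theta>" and t: "t \<ge> 0" and m0: "m \<ge> 0"
    and hx: "\<And>w. w \<in> rays \<theta> \<Longrightarrow> m \<le> cmod (of_real r * cis \<phi> - w)"
    and hy: "\<And>w. w \<in> rays \<theta> \<Longrightarrow> m \<le> cmod (of_real \<rho> * cis \<psi> - w)"
  shows "cmod (of_real r * cis \<phi> - of_real \<rho> * cis \<psi>) + 2*m
     \<le> 2 * sin (\<theta>/4) * (cmod (of_real r * cis \<phi> - of_real t) + cmod (of_real t - of_real \<rho> * cis \<psi>))"
proof -
  define x where "x = of_real r * cis \<phi>"
  define y where "y = of_real \<rho> * cis \<psi>"
  define k where "k = 2 * sin (\<theta>/4)"
  define D where "D = cmod (x - of_real t) + cmod (of_real t - y)"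
  have k0: "k \<ge> 0" and k1: "k > 1" using k_facts[OF th] by (simp_all add: k_def)
  have tri: "cmod (x - y) \<le> D" unfolding D_def using norm_triangle_ineq[of "x - of_real t" "of_real t - y"] by simp
  have goal: "cmod (x - y) + 2*m \<le> k * D"
  proof (cases "cos \<phi> + cos \<psi> \<le> 0")
    case True
    have d1: "r - t * cos \<phi> \<le> cmod (x - of_real t)" unfolding x_def using rp by (intro lowD) auto
    have d2: "\<rho> - t * cos \<psi> \<le> cmod (of_real t - y)" unfolding y_def
      using lowD[of \<rho> t \<psi>] rp by (simp add: norm_minus_commute)
    have "t * (cos \<phi> + cos \<psi>) \<le> 0" using True t by (simp add: mult_nonneg_nonpos)
    then have "r + \<rho> \<le> D" using d1 d2 by (simp add: D_def algebra_simps)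
    moreover have "cmod (x - y) + 2*m \<le> k * (r + \<rho>)"
      unfolding x_def y_def k_def using V_gen[OF th rp ang hx hy] .
    ultimately show ?thesis using k0 by (meson mult_left_mono order_trans)
  next
    case False
    then have cc: "cos \<phi> + cos \<psi> > 0" by simp
    show ?thesis
    proof (cases "Im x * Im y \<ge> 0")
      case True
      have Dc: "cmod (x - cnj y) \<le> D"
        unfolding D_def cnj_trick[of t y] using norm_triangle_ineq[of "x - of_real t" "of_real t - cnj y"] by simp
      have "cmod (x - y) + 2*m \<le> k * cmod (x - cnj y)"
      proof (cases "cos \<phi> \<ge> 0")
        case True
        show ?thesis using same_ord[OF th rp _ True cc m0 hx hy] \<open>Im x * Im y \<ge> 0\<close>
          by (simp add: x_def y_def k_def)
      next
        case False
        then have cp: "cos \<psi> \<ge> 0" using cc by simp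
        have "cmod (y - x) + 2*m \<le> k * cmod (y - cnj x)"
          using same_ord[OF th rp(2) rp(1) _ cp _ m0 hy hx] \<open>Im x * Im y \<ge> 0\<close> cc
          by (simp add: x_def y_def k_def mult.commute add.commute)
        moreover have "cmod (y - cnj x) = cmod (x - cnj y)"
        proof -
          have "cmod (y - cnj x) = cmod (cnj (y - cnj x))" by (rule complex_mod_cnj[symmetric])
          also have "cnj (y - cnj x) = - (x - cnj y)" by simp
          finally show ?thesis by (metis norm_minus_cancel)
        qed
        ultimately show ?thesis by (simp add: norm_minus_commute)
      qed
      then show ?thesis using Dc k0 by (meson mult_left_mono order_trans)
    next
      case False
      have Ix: "Im x = r * sin \<phi>" and Iy: "Im y = \<rho> * sin \<psi>" by (simp_all add: x_def y_def)
      have lo: "pi < a" if "sin a < 0" "0 < a" for a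
      proof (rule ccontr)
        assume "\<not> pi < a" then have "0 \<le> sin a" using that by (intro sin_ge_zero) auto
        then show False using that by simp
      qed
      have hi: "a < pi" if "sin a > 0" "a < \<theta>" for a
      proof (rule ccontr)
        assume "\<not> a < pi" then have "sin a \<le> 0" using that th by (intro sin_le_zero) auto
        then show False using that by simp
      qed
      have "2*m \<le> (k - 1) * cmod (x - y)"
      proof (cases "Im x < 0")
        case True
        then have "Im y > 0" using False by (smt (verit) mult_nonpos_nonpos)
        then have sy: "sin \<psi> > 0" using Iy rp by (simp add: zero_less_mult_iff)
        have sx: "sin \<phi> < 0" using True Ix rp by (simp add: mult_less_0_iff)
        show ?thesis using R2_ord[OF th rp lo[OF sx ang(1)] ang(2) ang(3) hi[OF sy ang(4)] cc m0 hx hy]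
          by (simp add: x_def y_def k_def)
      next
        case False
        have px: "Im x > 0"
        proof (rule ccontr)
          assume "\<not> Im x > 0" then have "Im x = 0" using False by simp
          then show False using \<open>\<not> Im x * Im y \<ge> 0\<close> by simp
        qed
        have py: "Im y < 0"
        proof (rule ccontr)
          assume "\<not> Im y < 0" then have "Im x * Im y \<ge> 0" using px by simp
          then show False using \<open>\<not> Im x * Im y \<ge> 0\<close> by simp
        qed
        from px py have "Im x > 0" "Im y < 0" .
        then have sx: "sin \<phi> > 0" and sy: "sin \<psi> < 0" using Ix Iy rp
          by (simp_all add: zero_less_mult_iff mult_less_0_iff)
        have "2*m \<le> (k - 1) * cmod (y - x)"
          using R2_ord[OF th rp(2) rp(1) lo[OF sy ang(3)] ang(4) ang(1) hi[OF sx ang(2)] _ m0 hy hx] cc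
          by (simp add: x_def y_def k_def add.commute)
        then show ?thesis by (simp add: norm_minus_commute)
      qed
      then have "cmod (x - y) + 2*m \<le> k * cmod (x - y)" by (simp add: algebra_simps)
      then show ?thesis using tri k0 by (meson mult_left_mono order_trans)
    qed
  qed
  then show ?thesis by (simp add: x_def y_def k_def D_def)
qed

lemma bound_rays:
  assumes th: "pi < \<theta>" "\<theta> < 2*pi" and x: "x \<in> sector \<theta>" and y: "y \<in> sector \<theta>"
    and z: "z \<in> rays \<theta>" and m0: "m \<ge> 0"
    and hx: "\<And>w. w \<in> rays \<theta> \<Longrightarrow> m \<le> cmod (x - w)"
    and hy: "\<And>w. w \<in> rays \<theta> \<Longrightarrow> m \<le> cmod (y - w)"
  shows "cmod (x - y) + 2*m \<le> 2 * sin (\<theta>/4) * (cmod (x - z) + cmod (z - y))"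
proof -
  have le: "\<theta> \<le> 2*pi" using th by simp
  obtain r \<phi> where xr: "r > 0" "0 < \<phi>" "\<phi> < \<theta>" "x = of_real r * cis \<phi>" using x sector_iff[OF le] by blast
  obtain \<rho> \<psi> where yr: "\<rho> > 0" "0 < \<psi>" "\<psi> < \<theta>" "y = of_real \<rho> * cis \<psi>" using y sector_iff[OF le] by blast
  obtain t where t: "t \<ge> 0" "z = of_real t \<or> z = of_real t * cis \<theta>" using z unfolding rays_def by blast
  show ?thesis
  proof (cases "z = of_real t")
    case True
    show ?thesis using core0[OF th xr(1) yr(1) xr(2,3) yr(2,3) t(1) m0, of] hx hy
      unfolding True xr(4) yr(4) by blast
  next
    case False
    then have zt: "z = of_real t * cis \<theta>" using t by blast
    have hx': "m \<le> cmod (of_real r * cis (\<theta> - \<phi>) - w)" if "w \<in> rays \<theta>" for w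
    proof -
      have "cmod (of_real r * cis (\<theta> - \<phi>) - w) = cmod (Fm \<theta> x - Fm \<theta> (Fm \<theta> w))" by (simp add: xr(4) Fm_polar)
      also have "\<dots> = cmod (x - Fm \<theta> w)" by (rule Fm_dist)
      finally show ?thesis using hx[OF Fm_rays[OF that]] by simp
    qed
    have hy': "m \<le> cmod (of_real \<rho> * cis (\<theta> - \<psi>) - w)" if "w \<in> rays \<theta>" for w
    proof -
      have "cmod (of_real \<rho> * cis (\<theta> - \<psi>) - w) = cmod (Fm \<theta> y - Fm \<theta> (Fm \<theta> w))" by (simp add: yr(4) Fm_polar)
      also have "\<dots> = cmod (y - Fm \<theta> w)" by (rule Fm_dist)
      finally show ?thesis using hy[OF Fm_rays[OF that]] by simp
    qed
    have c: "cmod (of_real r * cis (\<theta> - \<phi>) - of_real \<rho> * cis (\<theta> - \<psi>)) + 2*m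
     \<le> 2 * sin (\<theta>/4) * (cmod (of_real r * cis (\<theta> - \<phi>) - of_real t) + cmod (of_real t - of_real \<rho> * cis (\<theta> - \<psi>)))"
      using core0[OF th xr(1) yr(1) _ _ _ _ t(1) m0 hx' hy'] xr yr by simp
    have Fz: "Fm \<theta> z = of_real t" using zt Fm_polar[of \<theta> t \<theta>] by simp
    have e1: "cmod (of_real r * cis (\<theta> - \<phi>) - of_real \<rho> * cis (\<theta> - \<psi>)) = cmod (x - y)"
      using Fm_dist[of \<theta> x y] by (simp add: xr(4) yr(4) Fm_polar)
    have e2: "cmod (of_real r * cis (\<theta> - \<phi>) - of_real t) = cmod (x - z)"
      using Fm_dist[of \<theta> x z] Fz by (simp add: xr(4) Fm_polar)
    have e3: "cmod (of_real t - of_real \<rho> * cis (\<theta> - \<psi>)) = cmod (z - y)"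
      using Fm_dist[of \<theta> z y] Fz by (simp add: yr(4) Fm_polar)
    show ?thesis using c unfolding e1 e2 e3 .
  qed
qed

lemma ray_lb:
  assumes "t \<ge> 0" "s0 \<le> sin \<alpha> \<or> (cos \<alpha> \<le> 0 \<and> s0 \<le> 1)"
  shows "s0 \<le> cmod (of_real 1 * cis \<alpha> - of_real t)"
proof (cases "s0 \<le> sin \<alpha>")
  case True
  have "sin \<alpha> \<le> \<bar>Im (of_real 1 * cis \<alpha> - of_real t)\<bar>" by simp
  also have "\<dots> \<le> cmod (of_real 1 * cis \<alpha> - of_real t)" by (rule abs_Im_le_cmod)
  finally show ?thesis using True by simp
next
  case False
  then have c: "cos \<alpha> \<le> 0" "s0 \<le> 1" using assms by auto
  have "1 - t * cos \<alpha> \<le> cmod (of_real 1 * cis \<alpha> - of_real t)" by (rule lowD) simp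
  moreover have "t * cos \<alpha> \<le> 0" using assms(1) c by (simp add: mult_nonneg_nonpos)
  ultimately show ?thesis using c by linarith
qed

lemma inf_facts:
  assumes th: "pi < \<theta>" "\<theta> < 2*pi" and x: "x \<in> sector \<theta>" and y: "y \<in> sector \<theta>"
  defines "m \<equiv> min (bdist (sector \<theta>) x) (bdist (sector \<theta>) y)"
    and "I \<equiv> Inf ((\<lambda>z. cmod (x - z) + cmod (z - y)) ` frontier (sector \<theta>))"
  shows "0 \<le> m" "(cmod (x - y) + 2*m) / (2 * sin (\<theta>/4)) \<le> I"
    "\<And>w. w \<in> rays \<theta> \<Longrightarrow> I \<le> cmod (x - w) + cmod (w - y)"
proof -
  have fr: "frontier (sector \<theta>) = rays \<theta>" by (rule frontier_sector[OF th])
  have ne: "rays \<theta> \<noteq> {}" using of_real_in_rays[of 0 \<theta>] by auto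
  have bd: "bdd_below ((\<lambda>z. cmod (a - z)) ` rays \<theta>)" for a
    by (rule bdd_belowI[of _ 0]) auto
  have b0: "0 \<le> bdist (sector \<theta>) a" for a
    unfolding bdist_def fr using ne by (intro cInf_greatest) auto
  have bl: "bdist (sector \<theta>) a \<le> cmod (a - w)" if "w \<in> rays \<theta>" for a w
    unfolding bdist_def fr using that bd by (intro cInf_lower) auto
  show m0: "0 \<le> m" using b0 by (simp add: m_def)
  have hx: "m \<le> cmod (x - w)" if "w \<in> rays \<theta>" for w using bl[OF that, of x] by (simp add: m_def)
  have hy: "m \<le> cmod (y - w)" if "w \<in> rays \<theta>" for w using bl[OF that, of y] by (simp add: m_def)
  have kp: "0 < 2 * sin (\<theta>/4)" using theta_consts(10)[OF th] by simp
  show "(cmod (x - y) + 2*m) / (2 * sin (\<theta>/4)) \<le> I"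
    unfolding I_def fr
  proof (rule cInf_greatest)
    show "(\<lambda>z. cmod (x - z) + cmod (z - y)) ` rays \<theta> \<noteq> {}" using ne by simp
  next
    fix v assume "v \<in> (\<lambda>z. cmod (x - z) + cmod (z - y)) ` rays \<theta>"
    then obtain z where z: "z \<in> rays \<theta>" "v = cmod (x - z) + cmod (z - y)" by blast
    have "cmod (x - y) + 2*m \<le> 2 * sin (\<theta>/4) * v"
      using bound_rays[OF th x y z(1) m0 hx hy] z(2) by simp
    then show "(cmod (x - y) + 2*m) / (2 * sin (\<theta>/4)) \<le> v" using kp by (simp add: divide_le_eq mult.commute)
  qed
  show "I \<le> cmod (x - w) + cmod (w - y)" if "w \<in> rays \<theta>" for w
    unfolding I_def fr using that by (intro cInf_lower) (auto intro!: bdd_belowI[of _ 0])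
qed

lemma part1:
  assumes th: "pi < \<theta>" "\<theta> < 2*pi" and x: "x \<in> sector \<theta>" and y: "y \<in> sector \<theta>"
  shows "s_metric (sector \<theta>) x y \<le> 2 * sin (\<theta> / 4) * jstar_metric (sector \<theta>) x y"
proof -
  define m where "m = min (bdist (sector \<theta>) x) (bdist (sector \<theta>) y)"
  define I where "I = Inf ((\<lambda>z. cmod (x - z) + cmod (z - y)) ` frontier (sector \<theta>))"
  define k where "k = 2 * sin (\<theta>/4)"
  define d where "d = cmod (x - y)"
  note f = inf_facts[OF th x y, folded m_def I_def k_def d_def]
  have kp: "0 < k" using theta_consts(10)[OF th] by (simp add: k_def)
  have s: "s_metric (sector \<theta>) x y = d / I" by (simp add: s_metric_def I_def d_def)
  have j: "jstar_metric (sector \<theta>) x y = d / (d + 2*m)" by (simp add: jstar_metric_def m_def d_def)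
  show ?thesis
  proof (cases "x = y")
    case True
    then show ?thesis by (simp add: s_metric_def jstar_metric_def)
  next
    case False
    then have dp: "d > 0" by (simp add: d_def)
    have q: "0 < (d + 2*m) / k" using dp f(1) kp by simp
    have Ip: "0 < I" using f(2) q by linarith
    have pp: "0 < I * ((d + 2*m) / k)" using Ip q by (rule mult_pos_pos)
    have "d / I \<le> d / ((d + 2*m) / k)" by (rule divide_left_mono[OF f(2)]) (use dp pp in auto)
    also have "\<dots> = k * (d / (d + 2*m))" by simp
    finally show ?thesis unfolding s j k_def .
  qed
qed

lemma rays_obtain: "w \<in> rays \<theta> \<Longrightarrow> \<exists>t\<ge>0. w = of_real t \<or> w = of_real t * cis \<theta>"
  unfolding rays_def by blast

lemma part2:
  assumes th: "pi < \<theta>" "\<theta> < 2*pi" and c: "c < 2 * sin (\<theta> / 4)"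
  shows "\<exists>x\<in>sector \<theta>. \<exists>y\<in>sector \<theta>. c * jstar_metric (sector \<theta>) x y < s_metric (sector \<theta>) x y"
proof -
  define x where "x = of_real 1 * cis (\<theta>/4)"
  define y where "y = of_real 1 * cis (3*\<theta>/4)"
  define b4 where "b4 = sin (\<theta>/4)"
  have le: "\<theta> \<le> 2*pi" using th by simp
  have xs: "x \<in> sector \<theta>" unfolding x_def sector_iff[OF le] using th
    by (intro exI[of _ 1] exI[of _ "\<theta>/4"]) auto
  have ys: "y \<in> sector \<theta>" unfolding y_def sector_iff[OF le] using th
    by (intro exI[of _ 1] exI[of _ "3*\<theta>/4"]) auto
  define m where "m = min (bdist (sector \<theta>) x) (bdist (sector \<theta>) y)"
  define I where "I = Inf ((\<lambda>z. cmod (x - z) + cmod (z - y)) ` frontier (sector \<theta>))"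
  define d where "d = cmod (x - y)"
  note f = inf_facts[OF th xs ys, folded m_def I_def d_def]
  have b4p: "0 < b4" using theta_consts(5)[OF th] by (simp add: b4_def)
  have b41: "b4 \<le> 1" by (simp add: b4_def)
  have d2: "d\<^sup>2 = (2*b4)\<^sup>2"
  proof -
    have "d\<^sup>2 = 1 + 1 - 2*cos (\<theta>/4 - 3*\<theta>/4)" unfolding d_def x_def y_def polar_dist2 by simp
    also have "\<theta>/4 - 3*\<theta>/4 = - (2*(\<theta>/4))" by simp
    also have "cos (- (2*(\<theta>/4))) = 1 - 2*b4\<^sup>2" unfolding b4_def cos_minus by (rule cos_double_sin)
    finally show ?thesis by (simp add: power_mult_distrib)
  qed
  have dd: "d = 2*b4" by (rule power2_eq_iff_nonneg[THEN iffD1, OF _ _ d2]) (use b4p in \<open>auto simp: d_def\<close>)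
  have c34: "cos (3*\<theta>/4) \<le> 0"
  proof -
    have "0 \<le> cos (3*\<theta>/4 - pi)" using th by (intro cos_ge_zero) auto
    moreover have "cos (3*\<theta>/4 - pi) = - cos (3*\<theta>/4)" by (simp add: cos_diff)
    ultimately show ?thesis by simp
  qed
  have fr: "frontier (sector \<theta>) = rays \<theta>" by (rule frontier_sector[OF th])
  have ne: "rays \<theta> \<noteq> {}" using of_real_in_rays[of 0 \<theta>] by auto
  have lbx: "b4 \<le> cmod (x - w)" if win: "w \<in> rays \<theta>" for w
  proof -
    obtain t where t: "t \<ge> 0" "w = of_real t \<or> w = of_real t * cis \<theta>" using rays_obtain[OF win] by blast
    show ?thesis
    proof (cases "w = of_real t")
      case True
      have "sin (\<theta>/4) \<le> cmod (of_real 1 * cis (\<theta>/4) - of_real t)" by (rule ray_lb) (use t in auto)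
      then show ?thesis unfolding x_def b4_def True .
    next
      case False
      then have w: "w = of_real t * cis \<theta>" using t by blast
      have "cmod (x - w) = cmod (Fm \<theta> x - Fm \<theta> w)" by (rule Fm_dist[symmetric])
      moreover have "\<dots> = cmod (of_real 1 * cis (3*\<theta>/4) - of_real t)"
      proof -
        have "Fm \<theta> x = of_real 1 * cis (3*\<theta>/4)" unfolding x_def Fm_polar
          by (rule arg_cong[where f="\<lambda>a. of_real 1 * cis a"]) simp
        moreover have "Fm \<theta> w = of_real t" unfolding w using Fm_polar[of \<theta> t \<theta>] by simp
        ultimately show ?thesis by simp
      qed
      moreover have "b4 \<le> cmod (of_real 1 * cis (3*\<theta>/4) - of_real t)" by (rule ray_lb) (use t c34 b41 in auto)
      ultimately show ?thesis by linarith
    qed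
  qed
  have lby: "b4 \<le> cmod (y - w)" if win: "w \<in> rays \<theta>" for w
  proof -
    obtain t where t: "t \<ge> 0" "w = of_real t \<or> w = of_real t * cis \<theta>" using rays_obtain[OF win] by blast
    show ?thesis
    proof (cases "w = of_real t")
      case True
      have "b4 \<le> cmod (of_real 1 * cis (3*\<theta>/4) - of_real t)" by (rule ray_lb) (use t c34 b41 in auto)
      then show ?thesis unfolding y_def True .
    next
      case False
      then have w: "w = of_real t * cis \<theta>" using t by blast
      have "cmod (y - w) = cmod (Fm \<theta> y - Fm \<theta> w)" by (rule Fm_dist[symmetric])
      moreover have "\<dots> = cmod (of_real 1 * cis (\<theta>/4) - of_real t)"
      proof -
        have "Fm \<theta> y = of_real 1 * cis (\<theta>/4)" unfolding y_def Fm_polar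
          by (rule arg_cong[where f="\<lambda>a. of_real 1 * cis a"]) simp
        moreover have "Fm \<theta> w = of_real t" unfolding w using Fm_polar[of \<theta> t \<theta>] by simp
        ultimately show ?thesis by simp
      qed
      moreover have "b4 \<le> cmod (of_real 1 * cis (\<theta>/4) - of_real t)" unfolding b4_def by (rule ray_lb) (use t in auto)
      ultimately show ?thesis by linarith
    qed
  qed
  have bx: "b4 \<le> bdist (sector \<theta>) x" unfolding bdist_def fr using ne lbx by (intro cInf_greatest) auto
  have byy: "b4 \<le> bdist (sector \<theta>) y" unfolding bdist_def fr using ne lby by (intro cInf_greatest) auto
  have ms: "b4 \<le> m" using bx byy by (simp add: m_def)
  have I2: "I \<le> 2"
  proof -
    have "I \<le> cmod (x - 0) + cmod (0 - y)" using f(3)[of 0] of_real_in_rays[of 0 \<theta>] by simp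
    then show ?thesis by (simp add: x_def y_def norm_mult)
  qed
  have kp: "0 < 2 * b4" using b4p by simp
  have Ip: "0 < I"
  proof -
    have "0 < (d + 2*m) / (2 * b4)" using dd b4p f(1) by simp
    then show ?thesis using f(2) unfolding b4_def by linarith
  qed
  have sge: "b4 \<le> s_metric (sector \<theta>) x y"
  proof -
    have "s_metric (sector \<theta>) x y = d / I" by (simp add: s_metric_def I_def d_def)
    also have "d / 2 \<le> d / I" using I2 Ip dd b4p by (intro divide_left_mono) auto
    then have "b4 \<le> d / I" using dd by simp
    finally show ?thesis by simp
  qed
  have j: "jstar_metric (sector \<theta>) x y = d / (d + 2*m)" by (simp add: jstar_metric_def m_def d_def)
  have j0: "0 \<le> jstar_metric (sector \<theta>) x y" unfolding j using dd b4p f(1) by simp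
  have j2: "jstar_metric (sector \<theta>) x y \<le> 1/2"
  proof -
    have "d / (d + 2*m) \<le> d / (d + 2*b4)" using ms dd b4p by (intro divide_left_mono) auto
    also have "\<dots> = 1/2" using dd b4p by simp
    finally show ?thesis unfolding j .
  qed
  have "c * jstar_metric (sector \<theta>) x y < b4"
  proof (cases "c \<le> 0")
    case True
    then have "c * jstar_metric (sector \<theta>) x y \<le> 0" using j0 by (simp add: mult_nonpos_nonneg)
    then show ?thesis using b4p by linarith
  next
    case False
    then have "c * jstar_metric (sector \<theta>) x y \<le> c * (1/2)" using j2 by (intro mult_left_mono) auto
    then show ?thesis using c unfolding b4_def by linarith
  qed
  then show ?thesis using sge xs ys by (intro bexI[of _ x] bexI[of _ y]) auto
qed

theorem theorem3p4:
  fixes \<theta> :: real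
  assumes "pi < \<theta>" and "\<theta> < 2 * pi"
  shows "(\<forall>x\<in>sector \<theta>. \<forall>y\<in>sector \<theta>.
            s_metric (sector \<theta>) x y \<le> 2 * sin (\<theta> / 4) * jstar_metric (sector \<theta>) x y)
       \<and> (\<forall>c < 2 * sin (\<theta> / 4). \<exists>x\<in>sector \<theta>. \<exists>y\<in>sector \<theta>.
            c * jstar_metric (sector \<theta>) x y < s_metric (sector \<theta>) x y)"
  using part1[OF assms] part2[OF assms] by blast

end
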